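(* Let $X$ be a second countable locally compact Hausdorff space equipped with a compatible proper metric $d$ (closed balls are compact), fix $o\in X$, and let $B_o(r)$ denote the closed ball of radius $r$ about $o$. Let $\mathcal{U}$ be a nonprincipal ultrafilter over $\mathbb{N}$, let $(f_n)_{n\in\mathbb{N}}$ be a norm-bounded sequence in $C_0(X)$, and let $f_{\mathcal{U}}(x):=\lim_{\mathcal{U}}f_n(x)$ for $x\in X$. The following are equivalent: (1) $(f_n)$ is $\mathcal{U}$-equicontinuous on bounded sets: for every $r,\varepsilon>0$ there is $\delta>0$ such that $\{n\in\mathbb{N}: \forall s,t\in B_o(r),\ d(s,t)<\delta\Rightarrow|f_n(s)-f_n(t)|<\varepsilon\}\in\mathcal{U}$; (2) $(f_n)$ is $\mathcal{U}$-strict convergent to $f_{\mathcal{U}}$: for every $g\in C_0(X)$ and every $\varepsilon>0$, $\{n\in\mathbb{N}:\|f_ng-f_{\mathcal{U}}g\|_\infty<\varepsilon\}\in\mathcal{U}$.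
   Context: $\lim_{\mathcal{U}}$ denotes the limit along the ultrafilter $\mathcal{U}$: $c=\lim_{\mathcal{U}}c_n$ iff for every $\varepsilon>0$, $\{n:|c_n-c|<\varepsilon\}\in\mathcal{U}$; every bounded sequence of complex numbers has a unique $\mathcal{U}$-limit. *)

theory Defs
  imports "HOL-Analysis.Analysis"
begin

text \<open>Ultrafilters on nat, represented as HOL filters: a set A is in U iff eventually (\<lambda>n. n \<in> A) U.\<close>
definition ultrafilter :: "'a filter \<Rightarrow> bool" where
  "ultrafilter F \<longleftrightarrow> F \<noteq> bot \<and> (\<forall>P. eventually P F \<or> eventually (\<lambda>x. \<not> P x) F)"

definition nonprincipal :: "'a filter \<Rightarrow> bool" where
  "nonprincipal F \<longleftrightarrow> (\<forall>a. \<not> eventually (\<lambda>x. x = a) F)"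

definition C0 :: "('a::topological_space \<Rightarrow> complex) set" where
  "C0 = {f. continuous_on UNIV f \<and> (\<forall>e>0. compact {x. norm (f x) \<ge> e})}"

definition sup_norm :: "('a \<Rightarrow> complex) \<Rightarrow> real" where
  "sup_norm h = (SUP x. norm (h x))"

text \<open>Limit along a filter (unique for proper filters, Hausdorff codomain).\<close>
definition ulim :: "'b filter \<Rightarrow> ('b \<Rightarrow> complex) \<Rightarrow> complex" where
  "ulim F c = Lim F c"

end

theory Submission
  imports Defs
begin

lemma C0_bounded:
  assumes "f \<in> C0" shows "\<exists>B\<ge>0. \<forall>x. norm (f x) \<le> B"
proof -
  let ?K = "{x. norm (f x) \<ge> 1}"
  have K: "compact ?K" and c: "continuous_on UNIV f" using assms unfolding C0_def by auto
  have "compact (f ` ?K)" using K c by (meson compact_continuous_image continuous_on_subset top_greatest)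
  then obtain B where B: "\<forall>y\<in>f ` ?K. norm y \<le> B" using compact_imp_bounded bounded_iff by metis
  show ?thesis
  proof (rule exI[of _ "max B 1"], intro conjI allI)
    fix x show "norm (f x) \<le> max B 1"
    proof (cases "norm (f x) \<ge> 1")
      case True then have "f x \<in> f ` ?K" by auto
      then show ?thesis using B by fastforce
    qed auto
  qed auto
qed

lemma sup_norm_ge:
  assumes "\<forall>x. norm (h x) \<le> B" shows "norm (h x) \<le> sup_norm h"
  unfolding sup_norm_def by (rule cSUP_upper) (use assms in \<open>auto intro: bdd_aboveI2\<close>)

lemma sup_norm_le:
  assumes "\<forall>x. norm (h x) \<le> c" shows "sup_norm h \<le> c"
  unfolding sup_norm_def by (rule cSUP_least) (use assms in auto)

lemma ulim_tendsto:
  assumes U: "ultrafilter U" and B: "\<forall>n. norm (c n) \<le> B"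
  shows "(c \<longlongrightarrow> ulim U c) U"
proof -
  have nb: "U \<noteq> bot" using U unfolding ultrafilter_def by auto
  have "compact (cball (0::complex) B)" by simp
  moreover have "filtermap c U \<noteq> bot" using nb by (simp add: filtermap_bot_iff)
  moreover have "eventually (\<lambda>x. x \<in> cball 0 B) (filtermap c U)"
    using B by (simp add: eventually_filtermap)
  ultimately obtain L where L: "inf (nhds L) (filtermap c U) \<noteq> bot"
    unfolding compact_filter by blast
  have "(c \<longlongrightarrow> L) U"
  proof (rule topological_tendstoI)
    fix S assume S: "open S" "L \<in> S"
    show "eventually (\<lambda>n. c n \<in> S) U"
    proof (rule ccontr)
      assume "\<not> eventually (\<lambda>n. c n \<in> S) U"
      then have "eventually (\<lambda>n. c n \<notin> S) U" using U unfolding ultrafilter_def by blast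
      then have "eventually (\<lambda>x. x \<notin> S) (filtermap c U)" by (simp add: eventually_filtermap)
      moreover have "eventually (\<lambda>x. x \<in> S) (nhds L)" using S by (simp add: eventually_nhds_in_open)
      ultimately have "eventually (\<lambda>_. False) (inf (nhds L) (filtermap c U))"
        unfolding eventually_inf by blast
      then have "inf (nhds L) (filtermap c U) = bot" by (simp add: eventually_False)
      with L show False by simp
    qed
  qed
  then show ?thesis unfolding ulim_def using tendsto_Lim nb by metis
qed

lemma tri3: "norm ((a::complex) + b + c) \<le> norm a + norm b + norm c"
  using norm_triangle_ineq[of "a+b" c] norm_triangle_ineq[of a b] by linarith

lemma tri5: "norm ((a::complex) + b + c + d + e) \<le> norm a + norm b + norm c + norm d + norm e"
  using norm_triangle_ineq[of "a+b+c+d" e] norm_triangle_ineq[of "a+b+c" d] tri3[of a b c] by linarith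

lemma finite_net:
  assumes "compact S" "d > 0"
  obtains T where "finite T" "T \<subseteq> S" "S \<subseteq> (\<Union>t\<in>T. ball t d)"
proof -
  have "S \<subseteq> (\<Union>t\<in>S. ball t d)" using assms(2) by auto
  then show ?thesis using compactE_image[OF assms(1), of S "\<lambda>t. ball t d"] that by blast
qed


theorem proposition3p2:
  fixes x0 :: "'a::{metric_space, second_countable_topology}"
    and U :: "nat filter"
    and f :: "nat \<Rightarrow> 'a \<Rightarrow> complex"
  assumes locally_compact: "locally compact (UNIV :: 'a set)"
    and proper: "\<And>x r. compact (cball (x::'a) r)"
    and U: "ultrafilter U" "nonprincipal U"
    and fC0: "\<And>n. f n \<in> C0"
    and bdd: "\<exists>B. \<forall>n. sup_norm (f n) \<le> B"
  shows "(\<forall>r>0. \<forall>\<epsilon>>0. \<exists>\<delta>>0. eventually (\<lambda>n. \<forall>s\<in>cball x0 r. \<forall>t\<in>cball x0 r.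
            dist s t < \<delta> \<longrightarrow> norm (f n s - f n t) < \<epsilon>) U)
     \<longleftrightarrow>
     (\<forall>g\<in>C0. \<forall>\<epsilon>>0. eventually (\<lambda>n.
            sup_norm (\<lambda>x. f n x * g x - ulim U (\<lambda>m. f m x) * g x) < \<epsilon>) U)"
proof -
  obtain B0 where B0: "\<forall>n. sup_norm (f n) \<le> B0" using bdd by blast
  define B where "B = max B0 0"
  have B: "B \<ge> 0" "\<And>n x. norm (f n x) \<le> B"
  proof -
    show "B \<ge> 0" unfolding B_def by simp
    fix n x
    obtain C where "C \<ge> 0" "\<forall>x. norm (f n x) \<le> C" using C0_bounded[OF fC0] by blast
    then have "norm (f n x) \<le> sup_norm (f n)" by (intro sup_norm_ge) auto
    then show "norm (f n x) \<le> B" using B0 unfolding B_def by (metis max.coboundedI1 order_trans)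
  qed
  define fU where "fU x = ulim U (\<lambda>m. f m x)" for x
  have nb: "U \<noteq> bot" using U unfolding ultrafilter_def by auto
  have tl: "\<And>x. ((\<lambda>m. f m x) \<longlongrightarrow> fU x) U"
    unfolding fU_def by (rule ulim_tendsto[OF U(1)]) (use B(2) in blast)
  have fUB: "\<And>x. norm (fU x) \<le> B"
    by (rule Lim_norm_ubound[OF _ tl]) (use nb B(2) in \<open>auto simp: trivial_limit_def\<close>)
  show ?thesis unfolding fU_def[symmetric]
  proof
    assume H1: "\<forall>r>0. \<forall>\<epsilon>>0. \<exists>\<delta>>0. eventually (\<lambda>n. \<forall>s\<in>cball x0 r. \<forall>t\<in>cball x0 r.
            dist s t < \<delta> \<longrightarrow> norm (f n s - f n t) < \<epsilon>) U"
    show "\<forall>g\<in>C0. \<forall>\<epsilon>>0. eventually (\<lambda>n. sup_norm (\<lambda>x. f n x * g x - fU x * g x) < \<epsilon>) U"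
    proof (intro ballI allI impI)
      fix g :: "'a \<Rightarrow> complex" and \<epsilon> :: real assume g: "g \<in> C0" and e: "\<epsilon> > 0"
      obtain M where M: "M \<ge> 0" "\<And>x. norm (g x) \<le> M" using C0_bounded[OF g] by blast
      define \<eta> where "\<eta> = \<epsilon> / (4 * (B + 1))"
      have eta: "\<eta> > 0" using e B unfolding \<eta>_def by simp
      have "compact {x. \<eta> \<le> norm (g x)}" using g eta unfolding C0_def by auto
      then obtain e0 where e0: "\<forall>y\<in>{x. \<eta> \<le> norm (g x)}. dist x0 y \<le> e0"
        using compact_imp_bounded bounded_any_center by metis
      define R where "R = max e0 1"
      have R: "R > 0" unfolding R_def by simp
      have outK: "norm (g x) < \<eta>" if "x \<notin> cball x0 R" for x
        using that e0 unfolding R_def by (auto simp: not_le)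
      define e' where "e' = \<epsilon> / (8 * (M + 1))"
      have e': "e' > 0" using e M unfolding e'_def by simp
      obtain \<delta> where d: "\<delta> > 0" and Ev: "eventually (\<lambda>n. \<forall>s\<in>cball x0 R. \<forall>t\<in>cball x0 R.
            dist s t < \<delta> \<longrightarrow> norm (f n s - f n t) < e') U"
        using H1 R e' by blast
      have fUeq: "norm (fU s - fU t) \<le> e'" if "s \<in> cball x0 R" "t \<in> cball x0 R" "dist s t < \<delta>" for s t
      proof (rule Lim_norm_ubound)
        show "\<not> trivial_limit U" using nb by (simp add: trivial_limit_def)
        show "((\<lambda>n. f n s - f n t) \<longlongrightarrow> fU s - fU t) U" by (intro tendsto_diff tl)
        show "eventually (\<lambda>n. norm (f n s - f n t) \<le> e') U"
          using Ev by eventually_elim (meson that less_imp_le)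
      qed
      obtain T where T: "finite T" "T \<subseteq> cball x0 R" "cball x0 R \<subseteq> (\<Union>t\<in>T. ball t \<delta>)"
        using finite_net[OF proper d] by blast
      have EvT: "eventually (\<lambda>n. \<forall>t\<in>T. norm (f n t - fU t) < e') U"
      proof (rule eventually_ball_finite[OF T(1)], intro ballI)
        fix t show "eventually (\<lambda>n. norm (f n t - fU t) < e') U"
          using tl[of t] e' unfolding tendsto_iff dist_norm by blast
      qed
      show "eventually (\<lambda>n. sup_norm (\<lambda>x. f n x * g x - fU x * g x) < \<epsilon>) U"
        using Ev EvT
      proof eventually_elim
        case (elim n)
        have "sup_norm (\<lambda>x. f n x * g x - fU x * g x) \<le> \<epsilon> / 2"
        proof (rule sup_norm_le, intro allI)
          fix x
          have eq: "norm (f n x * g x - fU x * g x) = norm (f n x - fU x) * norm (g x)"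
            by (simp add: left_diff_distrib[symmetric] norm_mult)
          show "norm (f n x * g x - fU x * g x) \<le> \<epsilon> / 2"
          proof (cases "x \<in> cball x0 R")
            case True
            then obtain t where t: "t \<in> T" "dist t x < \<delta>" using T(3) by auto
            have tc: "t \<in> cball x0 R" using t T(2) by auto
            have dxt: "dist x t < \<delta>" using t(2) by (simp add: dist_commute)
            have h1: "norm (f n x - f n t) < e'" using elim(1) True tc dxt by blast
            have h2: "norm (f n t - fU t) < e'" using elim(2) t(1) by blast
            have h3: "norm (fU t - fU x) \<le> e'" using fUeq[OF tc True t(2)] .
            have eqx: "f n x - fU x = (f n x - f n t) + (f n t - fU t) + (fU t - fU x)" by simp
            have "norm (f n x - fU x) \<le> norm (f n x - f n t) + norm (f n t - fU t) + norm (fU t - fU x)"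
              unfolding eqx by (rule tri3)
            also have "\<dots> \<le> 3 * e'"
              using h1 h2 h3 by linarith
            finally have a: "norm (f n x - fU x) \<le> 3 * e'" .
            have "norm (f n x - fU x) * norm (g x) \<le> 3 * e' * M"
              using a M e' by (intro mult_mono) auto
            also have "\<dots> \<le> \<epsilon> / 2" unfolding e'_def using M e by (simp add: field_simps)
            finally show ?thesis using eq by simp
          next
            case False
            have a: "norm (f n x - fU x) \<le> 2 * B"
              using norm_triangle_ineq4[of "f n x" "fU x"] B(2)[of n x] fUB[of x] by simp
            have "norm (f n x - fU x) * norm (g x) \<le> 2 * B * \<eta>"
              using a outK[OF False] B by (intro mult_mono) auto
            also have "\<dots> \<le> \<epsilon> / 2" unfolding \<eta>_def using B e by (simp add: field_simps)
            finally show ?thesis using eq by simp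
          qed
        qed
        then show ?case using e by simp
      qed
    qed
  next
    assume H2: "\<forall>g\<in>C0. \<forall>\<epsilon>>0. eventually (\<lambda>n. sup_norm (\<lambda>x. f n x * g x - fU x * g x) < \<epsilon>) U"
    show "\<forall>r>0. \<forall>\<epsilon>>0. \<exists>\<delta>>0. eventually (\<lambda>n. \<forall>s\<in>cball x0 r. \<forall>t\<in>cball x0 r.
            dist s t < \<delta> \<longrightarrow> norm (f n s - f n t) < \<epsilon>) U"
    proof (intro allI impI)
      fix r \<epsilon> :: real assume r: "r > 0" and e: "\<epsilon> > 0"
      define g where "g x = complex_of_real (max 0 (min 1 (r + 1 - dist x0 x)))" for x
      have gcont: "continuous_on UNIV g" unfolding g_def by (intro continuous_intros)
      have gle: "norm (g x) \<le> 1" for x unfolding g_def by simp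
      have g1: "g x = 1" if "x \<in> cball x0 r" for x using that unfolding g_def by simp
      have gC0: "g \<in> C0"
        unfolding C0_def
      proof (intro CollectI conjI allI impI gcont)
        fix e :: real assume e: "e > 0"
        have cl: "closed {x. e \<le> norm (g x)}"
          by (intro closed_Collect_le continuous_intros gcont)
        have sub: "{x. e \<le> norm (g x)} \<subseteq> cball x0 (r + 1)"
        proof
          fix x assume "x \<in> {x. e \<le> norm (g x)}"
          then have "norm (g x) \<noteq> 0" using e by auto
          then show "x \<in> cball x0 (r + 1)" unfolding g_def by (auto simp: max_def min_def split: if_splits)
        qed
        show "compact {x. e \<le> norm (g x)}"
          using compact_Int_closed[OF proper cl, of x0 "r+1"] sub by (simp add: Int_absorb1)
      qed
      have e5: "\<epsilon> / 5 > 0" using e by simp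
      have E: "eventually (\<lambda>n. sup_norm (\<lambda>x. f n x * g x - fU x * g x) < \<epsilon> / 5) U"
        using H2 gC0 e5 by blast
      have pt: "norm (f n x - fU x) < \<epsilon> / 5"
        if "sup_norm (\<lambda>x. f n x * g x - fU x * g x) < \<epsilon> / 5" "x \<in> cball x0 r" for n x
      proof -
        have "\<forall>x. norm (f n x * g x - fU x * g x) \<le> 2 * B"
        proof
          fix x
          have "norm (f n x * g x - fU x * g x) = norm (f n x - fU x) * norm (g x)"
            by (simp add: left_diff_distrib[symmetric] norm_mult)
          also have "\<dots> \<le> 2 * B * 1"
            using norm_triangle_ineq4[of "f n x" "fU x"] B(2)[of n x] fUB[of x] gle[of x] B(1)
            by (intro mult_mono) auto
          finally show "norm (f n x * g x - fU x * g x) \<le> 2 * B" by simp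
        qed
        then have "norm (f n x * g x - fU x * g x) \<le> sup_norm (\<lambda>x. f n x * g x - fU x * g x)"
          by (rule sup_norm_ge)
        then show ?thesis using that g1 by simp
      qed
      obtain n0 where n0: "sup_norm (\<lambda>x. f n0 x * g x - fU x * g x) < \<epsilon> / 5"
        using eventually_happens'[OF nb E] by blast
      have "continuous_on (cball x0 r) (f n0)"
        using fC0[of n0] unfolding C0_def by (auto intro: continuous_on_subset)
      then have "uniformly_continuous_on (cball x0 r) (f n0)"
        using compact_uniformly_continuous proper by blast
      then obtain \<delta> where d: "\<delta> > 0" and dd: "\<And>s t. s \<in> cball x0 r \<Longrightarrow> t \<in> cball x0 r \<Longrightarrow>
          dist t s < \<delta> \<Longrightarrow> dist (f n0 t) (f n0 s) < \<epsilon> / 5"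
        unfolding uniformly_continuous_on_def using e5 by metis
      show "\<exists>\<delta>>0. eventually (\<lambda>n. \<forall>s\<in>cball x0 r. \<forall>t\<in>cball x0 r.
            dist s t < \<delta> \<longrightarrow> norm (f n s - f n t) < \<epsilon>) U"
      proof (rule exI[of _ \<delta>], intro conjI d)
        show "eventually (\<lambda>n. \<forall>s\<in>cball x0 r. \<forall>t\<in>cball x0 r.
            dist s t < \<delta> \<longrightarrow> norm (f n s - f n t) < \<epsilon>) U"
          using E
        proof eventually_elim
          case (elim n)
          show ?case
          proof (intro ballI impI)
            fix s t assume s: "s \<in> cball x0 r" and t: "t \<in> cball x0 r" and st: "dist s t < \<delta>"
            have 1: "norm (f n s - fU s) < \<epsilon> / 5" using pt[OF elim s] .
            have 2: "norm (f n0 s - fU s) < \<epsilon> / 5" using pt[OF n0 s] .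
            have 3: "norm (f n0 s - f n0 t) < \<epsilon> / 5" using dd[OF t s] st by (simp add: dist_norm dist_commute)
            have 4: "norm (f n0 t - fU t) < \<epsilon> / 5" using pt[OF n0 t] .
            have 5: "norm (f n t - fU t) < \<epsilon> / 5" using pt[OF elim t] .
            have eqs: "f n s - f n t = (f n s - fU s) + (fU s - f n0 s) + (f n0 s - f n0 t)
                 + (f n0 t - fU t) + (fU t - f n t)" by simp
            have "norm (f n s - f n t) \<le> norm (f n s - fU s) + norm (fU s - f n0 s) + norm (f n0 s - f n0 t)
                 + norm (f n0 t - fU t) + norm (fU t - f n t)"
              unfolding eqs by (rule tri5)
            also have "\<dots> < \<epsilon>" using 1 2 3 4 5 by (simp add: norm_minus_commute)
            finally show "norm (f n s - f n t) < \<epsilon>" .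
          qed
        qed
      qed
    qed
  qed
qed

end
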